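(* Suppose route sets $\mathbf R_s\in\mathcal R([e,\ell];\theta_s)$ and arrival-time vectors $\bm a_s\in\mathcal X(\mathbf R_s,[e,\ell];\theta_s)$, $s\in\mathcal S$, satisfy: (i) for every $i\in V_{\mathrm{cont}}$ and every $\beta\in\mathbb R$: either $a_{si}\le \beta+w_i/2$ for all $s$, or $a_{si}\ge \beta-w_i/2$ for all $s$; and (ii) for every $i\in V_{\mathrm{disc}}$ and every $b\in\{1,\dots,N_i-1\}$: either $a_{si}\le \bar y_{ib}$ for all $s$, or $a_{si}\ge \underline y_{i,b+1}$ for all $s$. Define $\tau^\star$ by: for $i\in V_{\mathrm{cont}}$, $\tau^\star_i=[y_i,y_i+w_i]$ with $y_i=\min\{\ell_i-w_i,\ \min_{s\in\mathcal S}a_{si}\}$; for $i\in V_{\mathrm{disc}}$, $\tau^\star_i=[\underline y_{ib_i},\bar y_{ib_i}]$ where $b_i$ is an index minimizing $\bar y_{ib}$ over $\{b\in\{1,\dots,N_i\}:\bar y_{ib}\ge\max_{s\in\mathcal S}a_{si}\}$. Then $\tau^\star_i\in TW_i$ for all $i\in V_C$, $\bm a_s\in\mathcal X(\mathbf R_s,\tau^\star;\theta_s)$ for all $s$, and $(\tau^\star,\{\mathbf R_s\}_{s\in\mathcal S})$ is a feasible TWAVRP solution.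
   Context: Let $G=(V,A)$ be a directed graph with $V=\{0,1,\dots,n\}$; node $0$ is the depot and $V_C=V\setminus\{0\}$ is the set of customers. The depot has operating window $[e_0,\ell_0]$, vehicles have capacity $Q$, and each customer $i\in V_C$ has an exogenous time window $[e_i,\ell_i]$. A vector of operational parameters $\theta$ consists of arc costs $c_{ij}\ge 0$ and arc travel times $t_{ij}\ge0$ for $(i,j)\in A$, and demands $q_i\ge 0$ and service times $u_i\ge 0$ for $i\in V_C$. The customer set is partitioned as $V_C=V_{\mathrm{cont}}\cup V_{\mathrm{disc}}$ (disjoint). For $i\in V_{\mathrm{cont}}$ a width $w_i\ge0$ with $e_i\le \ell_i-w_i$ is given and $TW_i=\{[y,y+w_i]: e_i\le y\le \ell_i-w_i\}$. For $i\in V_{\mathrm{disc}}$, $TW_i=\{[\underline y_{i1},\bar y_{i1}],\dots,[\underline y_{iN_i},\bar y_{iN_i}]\}$ is a finite set of intervals with $\underline y_{ib}\le\bar y_{ib}$, none contained in another, ordered so that $e_i=\underline y_{i1}<\dots<\underline y_{iN_i}$ and $\bar y_{i1}<\dots<\bar y_{iN_i}=\ell_i$. A route set $\mathbf R=(R_1,\dots,R_m)$ is a collection of pairwise disjoint nonempty sequences $R_k=(R_{k,1},\dots,R_{k,n_k})$ of distinct customers (every customer with positive demand appearing in exactly one sequence). For a vector $\tau=(\tau_1,\dots,\tau_n)$ of closed intervals, $\mathcal X(\mathbf R,\tau;\theta)$ is the set of $\bm a\in\mathbb R^n_{\ge0}$ with: $a_{R_{k,1}}\ge e_0+t_{0,R_{k,1}}$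 for all $k$; $a_{R_{k,l+1}}-a_{R_{k,l}}\ge t_{R_{k,l},R_{k,l+1}}+u_{R_{k,l}}$ for all $k$ and $1\le l\le n_k-1$; $a_{R_{k,n_k}}\le \ell_0-t_{R_{k,n_k},0}-u_{R_{k,n_k}}$ for all $k$; and $a_i\in\tau_i$ for all $i\in V_C$. We write $\mathbf R\in\mathcal R(\tau;\theta)$ if $\sum_{i\in R_k}q_i\le Q$ for every $k$ and $\mathcal X(\mathbf R,\tau;\theta)\neq\emptyset$. Finitely many scenarios $\theta_1,\dots,\theta_S$ are given, $\mathcal S=\{1,\dots,S\}$. A feasible TWAVRP solution is a pair $(\tau,\{\mathbf R_s\}_{s\in\mathcal S})$ with $\tau_i\in TW_i$ for all $i\in V_C$ and $\mathbf R_s\in\mathcal R(\tau;\theta_s)$ for all $s$. $[e,\ell]$ denotes the vector $([e_1,\ell_1],\dots,[e_n,\ell_n])$, and $a_{si}$ denotes the $i$-th component of $\bm a_s$. *)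

theory Defs
  imports Complex_Main
begin

text \<open>Operational parameters theta: arc costs c, travel times t, demands q, service times u.
  Nodes are natural numbers; node 0 is the depot, customers are 1..n.\<close>
record theta =
  cst :: "nat \<Rightarrow> nat \<Rightarrow> real"
  trv :: "nat \<Rightarrow> nat \<Rightarrow> real"
  dem :: "nat \<Rightarrow> real"
  srv :: "nat \<Rightarrow> real"

type_synonym interval = "real \<times> real"

definition in_ival :: "real \<Rightarrow> interval \<Rightarrow> bool" where
  "in_ival x I \<longleftrightarrow> fst I \<le> x \<and> x \<le> snd I"

definition TW :: "nat set \<Rightarrow> (nat \<Rightarrow> real) \<Rightarrow> (nat \<Rightarrow> real) \<Rightarrow> (nat \<Rightarrow> real)
    \<Rightarrow> (nat \<Rightarrow> nat) \<Rightarrow> (nat \<Rightarrow> nat \<Rightarrow> real) \<Rightarrow> (nat \<Rightarrow> nat \<Rightarrow> real) \<Rightarrow> nat \<Rightarrow> interval set" where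
  "TW Vcont e l w N ylo yhi i =
     (if i \<in> Vcont then {(y, y + w i) | y. e i \<le> y \<and> y \<le> l i - w i}
      else {(ylo i b, yhi i b) | b. b \<in> {1..N i}})"

definition route_set :: "nat \<Rightarrow> theta \<Rightarrow> nat list list \<Rightarrow> bool" where
  "route_set n \<theta> R \<longleftrightarrow>
     (\<forall>r\<in>set R. r \<noteq> [] \<and> distinct r \<and> set r \<subseteq> {1..n}) \<and>
     (\<forall>k<length R. \<forall>k'<length R. k \<noteq> k' \<longrightarrow> set (R!k) \<inter> set (R!k') = {}) \<and>
     (\<forall>i\<in>{1..n}. dem \<theta> i > 0 \<longrightarrow> (\<exists>r\<in>set R. i \<in> set r))"

text \<open>The set X(R, tau; theta) of feasible arrival-time vectors (a : nat => real, only the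
  components 1..n matter). e0 = e 0 and l0 = l 0 is the depot window.\<close>
definition Xset :: "nat \<Rightarrow> (nat \<Rightarrow> real) \<Rightarrow> (nat \<Rightarrow> real) \<Rightarrow> nat list list \<Rightarrow> (nat \<Rightarrow> interval)
    \<Rightarrow> theta \<Rightarrow> (nat \<Rightarrow> real) set" where
  "Xset n e l R \<tau> \<theta> = {a.
     (\<forall>i\<in>{1..n}. a i \<ge> 0) \<and>
     (\<forall>r\<in>set R. a (hd r) \<ge> e 0 + trv \<theta> 0 (hd r)) \<and>
     (\<forall>r\<in>set R. \<forall>k. k + 1 < length r \<longrightarrow>
          a (r!(k+1)) - a (r!k) \<ge> trv \<theta> (r!k) (r!(k+1)) + srv \<theta> (r!k)) \<and>
     (\<forall>r\<in>set R. a (last r) \<le> l 0 - trv \<theta> (last r) 0 - srv \<theta> (last r)) \<and>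
     (\<forall>i\<in>{1..n}. in_ival (a i) (\<tau> i))}"

definition Rfeas :: "nat \<Rightarrow> real \<Rightarrow> (nat \<Rightarrow> real) \<Rightarrow> (nat \<Rightarrow> real) \<Rightarrow> nat list list
    \<Rightarrow> (nat \<Rightarrow> interval) \<Rightarrow> theta \<Rightarrow> bool" where
  "Rfeas n Q e l R \<tau> \<theta> \<longleftrightarrow> route_set n \<theta> R \<and>
     (\<forall>r\<in>set R. sum_list (map (dem \<theta>) r) \<le> Q) \<and> Xset n e l R \<tau> \<theta> \<noteq> {}"

definition twavrp_feasible :: "nat \<Rightarrow> real \<Rightarrow> (nat \<Rightarrow> real) \<Rightarrow> (nat \<Rightarrow> real)
    \<Rightarrow> nat set \<Rightarrow> (nat \<Rightarrow> real) \<Rightarrow> (nat \<Rightarrow> nat) \<Rightarrow> (nat \<Rightarrow> nat \<Rightarrow> real) \<Rightarrow> (nat \<Rightarrow> nat \<Rightarrow> real)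
    \<Rightarrow> nat \<Rightarrow> (nat \<Rightarrow> theta) \<Rightarrow> (nat \<Rightarrow> interval) \<Rightarrow> (nat \<Rightarrow> nat list list) \<Rightarrow> bool" where
  "twavrp_feasible n Q e l Vcont w N ylo yhi S \<Theta> \<tau> Rs \<longleftrightarrow>
     (\<forall>i\<in>{1..n}. \<tau> i \<in> TW Vcont e l w N ylo yhi i) \<and>
     (\<forall>s\<in>{1..S}. Rfeas n Q e l (Rs s) \<tau> (\<Theta> s))"

end

theory Submission
  imports Defs
begin

theorem mainTheorem2:
  fixes n S :: nat and Q :: real
    and A :: "(nat \<times> nat) set"
    and e l w :: "nat \<Rightarrow> real"
    and Vcont Vdisc :: "nat set"
    and N :: "nat \<Rightarrow> nat" and ylo yhi :: "nat \<Rightarrow> nat \<Rightarrow> real"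
    and \<Theta> :: "nat \<Rightarrow> theta"
    and Rs :: "nat \<Rightarrow> nat list list"
    and as :: "nat \<Rightarrow> nat \<Rightarrow> real"
    and bi :: "nat \<Rightarrow> nat"
    and \<tau>s :: "nat \<Rightarrow> interval"
  assumes S_pos: "S \<ge> 1"
    and A_sub: "A \<subseteq> {0..n} \<times> {0..n}"
    and params_nonneg: "\<forall>s\<in>{1..S}. (\<forall>(i,j)\<in>A. cst (\<Theta> s) i j \<ge> 0 \<and> trv (\<Theta> s) i j \<ge> 0) \<and>
                          (\<forall>i\<in>{1..n}. dem (\<Theta> s) i \<ge> 0 \<and> srv (\<Theta> s) i \<ge> 0)"
    and partition: "Vcont \<union> Vdisc = {1..n}" "Vcont \<inter> Vdisc = {}"
    and cont_ok: "\<forall>i\<in>Vcont. w i \<ge> 0 \<and> e i \<le> l i - w i"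
    and disc_ok: "\<forall>i\<in>Vdisc. N i \<ge> 1 \<and>
                     (\<forall>b\<in>{1..N i}. ylo i b \<le> yhi i b) \<and>
                     strict_mono_on {1..N i} (ylo i) \<and> strict_mono_on {1..N i} (yhi i) \<and>
                     ylo i 1 = e i \<and> yhi i (N i) = l i"
    and R_feas: "\<forall>s\<in>{1..S}. Rfeas n Q e l (Rs s) (\<lambda>i. (e i, l i)) (\<Theta> s)"
    and a_feas: "\<forall>s\<in>{1..S}. as s \<in> Xset n e l (Rs s) (\<lambda>i. (e i, l i)) (\<Theta> s)"
    and cond_i: "\<forall>i\<in>Vcont. \<forall>\<beta>::real. (\<forall>s\<in>{1..S}. as s i \<le> \<beta> + w i / 2) \<or>
                                      (\<forall>s\<in>{1..S}. as s i \<ge> \<beta> - w i / 2)"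
    and cond_ii: "\<forall>i\<in>Vdisc. \<forall>b\<in>{1..<N i}. (\<forall>s\<in>{1..S}. as s i \<le> yhi i b) \<or>
                                          (\<forall>s\<in>{1..S}. as s i \<ge> ylo i (b + 1))"
    and bi_min: "\<forall>i\<in>Vdisc. bi i \<in> {1..N i} \<and> yhi i (bi i) \<ge> Max ((\<lambda>s. as s i) ` {1..S}) \<and>
                   (\<forall>b\<in>{1..N i}. yhi i b \<ge> Max ((\<lambda>s. as s i) ` {1..S}) \<longrightarrow> yhi i (bi i) \<le> yhi i b)"
    and tau_cont: "\<forall>i\<in>Vcont. \<tau>s i =
                     (let y = min (l i - w i) (Min ((\<lambda>s. as s i) ` {1..S})) in (y, y + w i))"
    and tau_disc: "\<forall>i\<in>Vdisc. \<tau>s i = (ylo i (bi i), yhi i (bi i))"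
  shows "(\<forall>i\<in>{1..n}. \<tau>s i \<in> TW Vcont e l w N ylo yhi i) \<and>
         (\<forall>s\<in>{1..S}. as s \<in> Xset n e l (Rs s) \<tau>s (\<Theta> s)) \<and>
         twavrp_feasible n Q e l Vcont w N ylo yhi S \<Theta> \<tau>s Rs"
proof -
  let ?I = "{1..S}"
  have ne: "?I \<noteq> {}" using S_pos by auto
  have ael: "\<And>s i. s \<in> ?I \<Longrightarrow> i \<in> {1..n} \<Longrightarrow> e i \<le> as s i \<and> as s i \<le> l i"
    using a_feas by (auto simp: Xset_def in_ival_def)
  have key: "\<And>s i. s \<in> ?I \<Longrightarrow> i \<in> {1..n} \<Longrightarrow> in_ival (as s i) (\<tau>s i) \<and> \<tau>s i \<in> TW Vcont e l w N ylo yhi i"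
  proof -
    fix s i assume s: "s \<in> ?I" and i: "i \<in> {1..n}"
    let ?F = "(\<lambda>s. as s i) ` ?I"
    have fin: "finite ?F" "?F \<noteq> {}" using ne by auto
    have mn: "Min ?F \<le> as s i" "as s i \<le> Max ?F" using fin s by auto
    obtain s1 where s1: "s1 \<in> ?I" "as s1 i = Max ?F" using Max_in[OF fin] by auto
    obtain s2 where s2: "s2 \<in> ?I" "as s2 i = Min ?F" using Min_in[OF fin] by auto
    show "in_ival (as s i) (\<tau>s i) \<and> \<tau>s i \<in> TW Vcont e l w N ylo yhi i"
    proof (cases "i \<in> Vcont")
      case True
      have co: "w i \<ge> 0" "e i \<le> l i - w i" using cont_ok True by auto
      have diff: "Max ?F - Min ?F \<le> w i"
      proof -
        define M where "M = Max ?F"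
        define m where "m = Min ?F"
        have "(\<forall>s\<in>?I. as s i \<le> (M + m)/2 + w i / 2) \<or> (\<forall>s\<in>?I. as s i \<ge> (M + m)/2 - w i / 2)"
          using cond_i True by blast
        moreover have "as s1 i = M" "as s2 i = m" using s1 s2 M_def m_def by auto
        ultimately have "M \<le> (M + m)/2 + w i / 2 \<or> m \<ge> (M + m)/2 - w i / 2"
          using s1(1) s2(1) by metis
        then show ?thesis unfolding M_def[symmetric] m_def[symmetric] by (auto simp: field_simps)
      qed
      have eM: "e i \<le> Min ?F" using ael s2 i by metis
      have lM: "Max ?F \<le> l i" using ael s1 i by metis
      have t: "\<tau>s i = (min (l i - w i) (Min ?F), min (l i - w i) (Min ?F) + w i)"
        using tau_cont True by (simp add: Let_def)
      show ?thesis unfolding t in_ival_def TW_def using True co diff eM lM mn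
        by (auto simp: min_def)
    next
      case False
      then have D: "i \<in> Vdisc" using partition i by auto
      have d: "N i \<ge> 1" "\<forall>b\<in>{1..N i}. ylo i b \<le> yhi i b" "strict_mono_on {1..N i} (yhi i)"
        "ylo i 1 = e i" using disc_ok D by auto
      have b: "bi i \<in> {1..N i}" "yhi i (bi i) \<ge> Max ?F"
        "\<forall>b\<in>{1..N i}. yhi i b \<ge> Max ?F \<longrightarrow> yhi i (bi i) \<le> yhi i b" using bi_min D by auto
      have t: "\<tau>s i = (ylo i (bi i), yhi i (bi i))" using tau_disc D by auto
      have lo: "ylo i (bi i) \<le> as s i"
      proof (cases "bi i = 1")
        case True then show ?thesis using d ael s i by auto
      next
        case False
        let ?b = "bi i - 1"
        have bb: "?b \<in> {1..<N i}" "?b + 1 = bi i" using b False by auto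
        have "(\<forall>s\<in>?I. as s i \<le> yhi i ?b) \<or> (\<forall>s\<in>?I. as s i \<ge> ylo i (?b + 1))"
          using cond_ii D bb(1) by blast
        then show ?thesis
        proof
          assume h: "\<forall>s\<in>?I. as s i \<le> yhi i ?b"
          have "yhi i ?b \<ge> Max ?F" using h s1 by metis
          then have "yhi i (bi i) \<le> yhi i ?b" using b(3) bb(1) by auto
          moreover have "yhi i ?b < yhi i (bi i)"
            using d(3) bb b(1) by (auto simp: strict_mono_on_def)
          ultimately show ?thesis by linarith
        next
          assume "\<forall>s\<in>?I. as s i \<ge> ylo i (?b + 1)"
          then show ?thesis using bb s by auto
        qed
      qed
      show ?thesis unfolding t in_ival_def TW_def using False lo b mn by auto
    qed
  qed
  have tw: "\<forall>i\<in>{1..n}. \<tau>s i \<in> TW Vcont e l w N ylo yhi i" using key ne by blast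
  have xs: "\<forall>s\<in>?I. as s \<in> Xset n e l (Rs s) \<tau>s (\<Theta> s)"
    using a_feas key by (auto simp: Xset_def)
  have "\<forall>s\<in>?I. Rfeas n Q e l (Rs s) \<tau>s (\<Theta> s)"
    using R_feas xs by (auto simp: Rfeas_def)
  then show ?thesis using tw xs by (simp add: twavrp_feasible_def)
qed

end
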